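(* For every $p\ge 1$, the joint distribution of the endhered patterns $\pi=12\cdots p$ and $\tau=p\cdots 21$ is symmetric: $a_{n,k,m}(\pi,\tau)=a_{n,k,m}(\tau,\pi)$ for all $n,k,m$. In particular, the number of matchings of size $n$ containing exactly $k$ occurrences of $21$ and exactly $m$ occurrences of $12$ equals the number of matchings of size $n$ containing exactly $m$ occurrences of $21$ and exactly $k$ occurrences of $12$.
   Context: A matching of size $n$ is a set of $n$ arcs $(a,b)$ with $1\le a<b\le 2n$ such that each point of $\{1,\dots,2n\}$ belongs to exactly one arc; $a$ is the starting point and $b$ the ending point. An endhered pattern of size $p$ is identified with a permutation $\pi=\pi_1\dots\pi_p$ of $\{1,\dots,p\}$ (the matching on $\{1,\dots,2p\}$ whose arc ending at $p+t$ starts at $\pi_t$). A matching $\mu$ contains $\pi$ at position $(i+1,j+1)$ (integers $i\ge0$, $j\ge i+p$) if for each $s=1,\dots,p$ the pair $(i+s,\,j+\pi^{-1}(s))$ is an arc of $\mu$. Thus an occurrence of $21$ is a pair of arcs $(i+1,j+2),(i+2,j+1)$ and an occurrence of $12$ is a pair of arcs $(i+1,j+1),(i+2,j+2)$. The number of occurrences of $\pi$ in $\mu$ is the number of positions at which $\mu$ contains $\pi$; $a_{n,k,m}(\pi,\tau)$ is the number of matchings of size $n$ with exactly $k$ occurrences of $\pi$ and exactly $m$ occurrences of $\tau$. *)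

theory Defs
  imports Main
begin

definition is_matching :: "nat \<Rightarrow> (nat \<times> nat) set \<Rightarrow> bool" where
  "is_matching n \<mu> \<longleftrightarrow>
     \<mu> \<subseteq> {(a, b). 1 \<le> a \<and> a < b \<and> b \<le> 2 * n} \<and>
     (\<forall>x\<in>{1..2*n}. \<exists>!e. e \<in> \<mu> \<and> (fst e = x \<or> snd e = x))"

text \<open>An endhered pattern of size p is a permutation pi of {1..p} (a function
  nat => nat, meaningful on {1..p}).  The matching mu contains pi at position
  (i+1, j+1) (with j >= i+p) if (i+s, j + pi^{-1}(s)) is an arc for s = 1..p.\<close>
definition contains_at :: "(nat \<times> nat) set \<Rightarrow> nat \<Rightarrow> (nat \<Rightarrow> nat) \<Rightarrow> nat \<Rightarrow> nat \<Rightarrow> bool" where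
  "contains_at \<mu> p \<pi> i j \<longleftrightarrow>
     i + p \<le> j \<and> (\<forall>s\<in>{1..p}. (i + s, j + inv_into {1..p} \<pi> s) \<in> \<mu>)"

definition occurrences :: "(nat \<times> nat) set \<Rightarrow> nat \<Rightarrow> (nat \<Rightarrow> nat) \<Rightarrow> nat" where
  "occurrences \<mu> p \<pi> = card {(i, j). contains_at \<mu> p \<pi> i j}"

definition a_count :: "nat \<Rightarrow> nat \<Rightarrow> nat \<Rightarrow> nat \<Rightarrow> (nat \<Rightarrow> nat) \<Rightarrow> (nat \<Rightarrow> nat) \<Rightarrow> nat" where
  "a_count p n k m \<pi> \<tau> =
     card {\<mu>. is_matching n \<mu> \<and> occurrences \<mu> p \<pi> = k \<and> occurrences \<mu> p \<tau> = m}"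

definition incr_pat :: "nat \<Rightarrow> nat \<Rightarrow> nat" where
  "incr_pat p t = t"

definition decr_pat :: "nat \<Rightarrow> nat \<Rightarrow> nat" where
  "decr_pat p t = p + 1 - t"

end

theory Submission imports Defs begin
lemma matching_iff:
  "is_matching n \<mu> \<longleftrightarrow>
     \<mu> \<subseteq> {(a, b). 1 \<le> a \<and> a < b \<and> b \<le> 2 * n} \<and> inj_on fst \<mu> \<and> inj_on snd \<mu>
     \<and> fst ` \<mu> \<inter> snd ` \<mu> = {} \<and> fst ` \<mu> \<union> snd ` \<mu> = {1..2*n}"
proof
  assume M: "is_matching n \<mu>"
  then have S: "\<mu> \<subseteq> {(a, b). 1 \<le> a \<and> a < b \<and> b \<le> 2 * n}"
    and U: "\<And>x. x \<in> {1..2*n} \<Longrightarrow> \<exists>!e. e \<in> \<mu> \<and> (fst e = x \<or> snd e = x)"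
    unfolding is_matching_def by auto
  have un: "e = e'" if "e \<in> \<mu>" "e' \<in> \<mu>" "fst e = x \<or> snd e = x" "fst e' = x \<or> snd e' = x" for e e' x
  proof -
    have "x \<in> {1..2*n}" using that S by auto
    from U[OF this] show ?thesis using that by blast
  qed
  have "inj_on fst \<mu>" by (rule inj_onI) (metis un)
  moreover have "inj_on snd \<mu>" by (rule inj_onI) (metis un)
  moreover have "fst ` \<mu> \<inter> snd ` \<mu> = {}"
  proof (rule ccontr)
    assume "fst ` \<mu> \<inter> snd ` \<mu> \<noteq> {}"
    then obtain e e' where "e \<in> \<mu>" "e' \<in> \<mu>" "fst e = snd e'" by auto
    with un[of e e' "fst e"] have "e = e'" by auto
    with \<open>e \<in> \<mu>\<close> \<open>fst e = snd e'\<close> S show False by auto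
  qed
  moreover have "fst ` \<mu> \<union> snd ` \<mu> = {1..2*n}"
  proof
    show "fst ` \<mu> \<union> snd ` \<mu> \<subseteq> {1..2*n}" using S by force
    show "{1..2*n} \<subseteq> fst ` \<mu> \<union> snd ` \<mu>"
    proof
      fix x assume "x \<in> {1..2*n}"
      from U[OF this] obtain e where "e \<in> \<mu>" "fst e = x \<or> snd e = x" by blast
      then show "x \<in> fst ` \<mu> \<union> snd ` \<mu>" by force
    qed
  qed
  ultimately show "\<mu> \<subseteq> {(a, b). 1 \<le> a \<and> a < b \<and> b \<le> 2 * n} \<and> inj_on fst \<mu> \<and> inj_on snd \<mu>
     \<and> fst ` \<mu> \<inter> snd ` \<mu> = {} \<and> fst ` \<mu> \<union> snd ` \<mu> = {1..2*n}" using S by blast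
next
  assume A: "\<mu> \<subseteq> {(a, b). 1 \<le> a \<and> a < b \<and> b \<le> 2 * n} \<and> inj_on fst \<mu> \<and> inj_on snd \<mu>
     \<and> fst ` \<mu> \<inter> snd ` \<mu> = {} \<and> fst ` \<mu> \<union> snd ` \<mu> = {1..2*n}"
  show "is_matching n \<mu>" unfolding is_matching_def
  proof (intro conjI ballI)
    show "\<mu> \<subseteq> {(a, b). 1 \<le> a \<and> a < b \<and> b \<le> 2 * n}" using A by blast
    fix x assume x: "x \<in> {1..2*n}"
    then have "x \<in> fst ` \<mu> \<union> snd ` \<mu>" using A by blast
    then obtain e where e: "e \<in> \<mu>" "fst e = x \<or> snd e = x" by blast
    show "\<exists>!e. e \<in> \<mu> \<and> (fst e = x \<or> snd e = x)"
    proof (rule ex1I[of _ e])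
      show "e \<in> \<mu> \<and> (fst e = x \<or> snd e = x)" using e by blast
      fix e' assume e': "e' \<in> \<mu> \<and> (fst e' = x \<or> snd e' = x)"
      have d: "fst a \<noteq> snd b" if "a \<in> \<mu>" "b \<in> \<mu>" for a b using A that by blast
      from e e' d show "e' = e"
        by (metis A inj_onD)
    qed
  qed
qed

definition run :: "nat set \<Rightarrow> nat \<Rightarrow> nat \<Rightarrow> nat \<Rightarrow> bool" where
  "run C b l h \<longleftrightarrow> l \<le> b \<and> b \<le> h \<and> {l..h} \<subseteq> C \<and> l - 1 \<notin> C \<and> h + 1 \<notin> C"

definition rf :: "nat set \<Rightarrow> nat \<Rightarrow> nat" where
  "rf C b = (let lh = (THE lh. run C b (fst lh) (snd lh)) in fst lh + snd lh - b)"

lemma run_unique: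
  assumes "run C b l h" "run C b l' h'" shows "l = l' \<and> h = h'"
proof -
  have "\<not> l < l'" "\<not> l' < l" "\<not> h < h'" "\<not> h' < h"
  proof -
    show "\<not> l < l'"
    proof
      assume "l < l'" then have "l' - 1 \<in> {l..h}" using assms unfolding run_def by auto
      then show False using assms unfolding run_def by blast
    qed
    show "\<not> l' < l"
    proof
      assume "l' < l" then have "l - 1 \<in> {l'..h'}" using assms unfolding run_def by auto
      then show False using assms unfolding run_def by blast
    qed
    show "\<not> h < h'"
    proof
      assume "h < h'" then have "h + 1 \<in> {l'..h'}" using assms unfolding run_def by auto
      then show False using assms unfolding run_def by blast
    qed
    show "\<not> h' < h"
    proof
      assume "h' < h" then have "h' + 1 \<in> {l..h}" using assms unfolding run_def by auto
      then show False using assms unfolding run_def by blast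
    qed
  qed
  then show ?thesis by auto
qed

lemma rf_eq: assumes "run C b l h" shows "rf C b = l + h - b"
proof -
  have "(THE lh. run C b (fst lh) (snd lh)) = (l, h)"
    by (rule the_equality) (use assms run_unique in auto)
  then show ?thesis unfolding rf_def by simp
qed

lemma run_refl: assumes "run C b l h" shows "run C (l + h - b) l h"
  using assms unfolding run_def by auto

lemma run_mem: assumes "run C b l h" "l \<le> u" "u \<le> h" shows "run C u l h"
  using assms unfolding run_def by auto

lemma run_exists:
  assumes "finite C" "0 \<notin> C" "b \<in> C" shows "\<exists>l h. run C b l h"
proof -
  define S where "S = {x. b \<le> x \<and> {b..x} \<subseteq> C}"
  define T where "T = {x. x \<le> b \<and> {x..b} \<subseteq> C}"
  have "S \<subseteq> C" unfolding S_def by auto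
  then have fS: "finite S" using assms finite_subset by auto
  have bS: "b \<in> S" using assms unfolding S_def by auto
  have fT: "finite T" unfolding T_def by auto
  have bT: "b \<in> T" using assms unfolding T_def by auto
  define h where "h = Max S"
  define l where "l = Min T"
  have hS: "h \<in> S" unfolding h_def using fS bS Max_in by blast
  have lT: "l \<in> T" unfolding l_def using fT bT Min_in by blast
  have h1: "h + 1 \<notin> C"
  proof
    assume "h + 1 \<in> C"
    then have "h + 1 \<in> S" using hS unfolding S_def by (auto simp: le_Suc_eq)
    then have "h + 1 \<le> h" unfolding h_def using fS Max_ge by blast
    then show False by simp
  qed
  have "l \<in> C" using lT unfolding T_def by auto
  then have "l \<ge> 1" using assms by (cases l) auto
  have l1: "l - 1 \<notin> C"
  proof
    assume a: "l - 1 \<in> C"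
    have "{l - 1..b} \<subseteq> C"
    proof
      fix x assume "x \<in> {l - 1..b}"
      then have "x = l - 1 \<or> x \<in> {l..b}" by auto
      then show "x \<in> C" using a lT unfolding T_def by auto
    qed
    then have "l - 1 \<in> T" using lT unfolding T_def by auto
    then have "l \<le> l - 1" unfolding l_def using fT Min_le by blast
    then show False using \<open>l \<ge> 1\<close> by simp
  qed
  have "{l..h} \<subseteq> C"
  proof
    fix x assume x: "x \<in> {l..h}"
    show "x \<in> C"
    proof (cases "x \<le> b")
      case True then show ?thesis using x lT unfolding T_def by auto
    next
      case False then show ?thesis using x hS unfolding S_def by auto
    qed
  qed
  then have "run C b l h" using lT hS h1 l1 unfolding S_def T_def run_def by auto
  then show ?thesis by blast
qed

definition phi :: "(nat \<times> nat) set \<Rightarrow> (nat \<times> nat) set" where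
  "phi \<mu> = (\<lambda>(a, b). (a, rf (snd ` \<mu>) b)) ` \<mu>"

locale mt =
  fixes n :: nat and \<mu> :: "(nat \<times> nat) set"
  assumes M: "is_matching n \<mu>"
begin

abbreviation "C \<equiv> snd ` \<mu>"

lemma S: "\<mu> \<subseteq> {(a, b). 1 \<le> a \<and> a < b \<and> b \<le> 2 * n}"
  and IF: "inj_on fst \<mu>" and IS: "inj_on snd \<mu>"
  and D: "fst ` \<mu> \<inter> snd ` \<mu> = {}" and U: "fst ` \<mu> \<union> snd ` \<mu> = {1..2*n}"
  using M unfolding matching_iff by blast+

lemma finC: "finite C" using U by (metis finite_UnI finite_Un finite_atLeastAtMost)

lemma C0: "0 \<notin> C"
proof
  assume "0 \<in> C" then have "0 \<in> {1..2*n}" using U by blast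
  then show False by simp
qed

lemma Cle: "x \<in> C \<Longrightarrow> x \<le> 2 * n" using U by auto

lemma runC: "b \<in> C \<Longrightarrow> \<exists>l h. run C b l h" using run_exists finC C0 by blast

lemma rfC: assumes "b \<in> C" shows "rf C b \<in> C" "rf C (rf C b) = b"
proof -
  obtain l h where r: "run C b l h" using runC assms by blast
  then have r2: "run C (l + h - b) l h" by (rule run_refl)
  have "rf C b = l + h - b" using r by (rule rf_eq)
  moreover have "l + h - (l + h - b) = b" using r unfolding run_def by auto
  ultimately show "rf C b \<in> C" "rf C (rf C b) = b" using r2 rf_eq[OF r2] unfolding run_def by auto
qed

lemma arc_lt: assumes "(a, b) \<in> \<mu>" shows "a < rf C b" "rf C b \<le> 2 * n"
proof -
  have bC: "b \<in> C" using assms by force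
  obtain l h where r: "run C b l h" using runC bC by blast
  have aC: "a \<notin> C" using assms D by force
  have ab: "a < b" using assms S by auto
  have "a < l"
  proof (rule ccontr)
    assume "\<not> a < l" then have "a \<in> {l..h}" using ab r unfolding run_def by auto
    then show False using aC r unfolding run_def by blast
  qed
  then show "a < rf C b" using rf_eq[OF r] r unfolding run_def by auto
  show "rf C b \<le> 2 * n" using rfC(1)[OF bC] Cle by blast
qed

lemma phi_snd: "snd ` phi \<mu> = C"
proof -
  have "snd ` phi \<mu> = rf C ` C" unfolding phi_def by force
  also have "\<dots> = C"
  proof
    show "rf C ` C \<subseteq> C" using rfC by auto
    show "C \<subseteq> rf C ` C"
    proof
      fix x assume "x \<in> C" then show "x \<in> rf C ` C" using rfC by (metis imageI)
    qed
  qed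
  finally show ?thesis .
qed

lemma phi_fst: "fst ` phi \<mu> = fst ` \<mu>"
  unfolding phi_def image_image by (simp add: case_prod_beta)

lemma mem_phi: "x \<in> phi \<mu> \<longleftrightarrow> (\<exists>a b. (a,b) \<in> \<mu> \<and> x = (a, rf C b))"
  unfolding phi_def by auto

lemma phi_matching: "is_matching n (phi \<mu>)"
  unfolding matching_iff
proof (intro conjI)
  show "phi \<mu> \<subseteq> {(a, b). 1 \<le> a \<and> a < b \<and> b \<le> 2 * n}"
  proof
    fix x assume "x \<in> phi \<mu>"
    then obtain a b where ab: "(a,b) \<in> \<mu>" "x = (a, rf C b)" unfolding mem_phi by blast
    have "1 \<le> a" using S ab(1) by blast
    then show "x \<in> {(a, b). 1 \<le> a \<and> a < b \<and> b \<le> 2 * n}" using arc_lt[OF ab(1)] ab(2) by simp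
  qed
  show "inj_on fst (phi \<mu>)"
  proof (rule inj_onI)
    fix x y assume xy: "x \<in> phi \<mu>" "y \<in> phi \<mu>" "fst x = fst y"
    obtain a b where 1: "(a,b) \<in> \<mu>" "x = (a, rf C b)" using xy(1) unfolding mem_phi by blast
    obtain a' b' where 2: "(a',b') \<in> \<mu>" "y = (a', rf C b')" using xy(2) unfolding mem_phi by blast
    have "a = a'" using 1 2 xy(3) by simp
    then have "(a,b) = (a',b')" using IF 1 2 by (metis fst_conv inj_onD)
    then show "x = y" using 1 2 by simp
  qed
  show "inj_on snd (phi \<mu>)"
  proof (rule inj_onI)
    fix x y assume xy: "x \<in> phi \<mu>" "y \<in> phi \<mu>" "snd x = snd y"
    obtain a b where 1: "(a,b) \<in> \<mu>" "x = (a, rf C b)" using xy(1) unfolding mem_phi by blast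
    obtain a' b' where 2: "(a',b') \<in> \<mu>" "y = (a', rf C b')" using xy(2) unfolding mem_phi by blast
    have r: "rf C b = rf C b'" using 1 2 xy(3) by simp
    have "b \<in> C" "b' \<in> C" using 1 2 by force+
    then have "b = b'" using rfC(2) r by metis
    then have "(a,b) = (a',b')" using IS 1 2 by (metis snd_conv inj_onD)
    then show "x = y" using 1 2 by simp
  qed
  show "fst ` phi \<mu> \<inter> snd ` phi \<mu> = {}" using D phi_fst phi_snd by simp
  show "fst ` phi \<mu> \<union> snd ` phi \<mu> = {1..2*n}" using U phi_fst phi_snd by simp
qed

lemma phi_phi: "phi (phi \<mu>) = \<mu>"
proof
  have e: "x \<in> phi (phi \<mu>) \<longleftrightarrow> (\<exists>a b. (a,b) \<in> phi \<mu> \<and> x = (a, rf C b))" for x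
    using phi_snd unfolding phi_def[of "phi \<mu>"] by auto
  show "phi (phi \<mu>) \<subseteq> \<mu>"
  proof
    fix x assume "x \<in> phi (phi \<mu>)"
    then obtain a b where ab0: "(a, b) \<in> phi \<mu>" "x = (a, rf C b)" unfolding e by blast
    then obtain a1 b1 where ab1: "(a1, b1) \<in> \<mu>" "(a, b) = (a1, rf C b1)" unfolding mem_phi by blast
    then have ab: "(a, b1) \<in> \<mu>" "x = (a, rf C (rf C b1))" using ab0 by auto
    have "b1 \<in> C" using ab by force
    then show "x \<in> \<mu>" using ab rfC(2) by simp
  qed
  show "\<mu> \<subseteq> phi (phi \<mu>)"
  proof
    fix x assume x: "x \<in> \<mu>"
    obtain a b where ab: "x = (a, b)" by (cases x)
    have "b \<in> C" using x ab by force
    then have "x = (a, rf C (rf C b))" using ab rfC(2) by simp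
    moreover have "(a, rf C b) \<in> phi \<mu>" unfolding mem_phi using x ab by blast
    ultimately show "x \<in> phi (phi \<mu>)" unfolding e by blast
  qed
qed

lemma G:
  assumes p: "p \<ge> 1" and arcs: "\<forall>s\<in>{1..p}. (i + s, j + t s) \<in> \<mu>"
    and tin: "\<forall>s\<in>{1..p}. t s \<in> {1..p}" and tonto: "\<forall>u\<in>{1..p}. \<exists>s\<in>{1..p}. t s = u"
  shows "\<exists>j'. i + p \<le> j' \<and> (\<forall>s\<in>{1..p}. (i + s, j' + (p + 1 - t s)) \<in> phi \<mu>)"
proof -
  have inC: "j + u \<in> C" if "u \<in> {1..p}" for u
  proof -
    from bspec[OF tonto that] obtain s where "s \<in> {1..p}" "t s = u" by (rule bexE)
    then have "(i + s, j + u) \<in> \<mu>" using arcs by metis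
    then show ?thesis by (rule image_eqI[rotated]) simp
  qed
  have "1 \<in> {1..p}" using p by simp
  then have "j + 1 \<in> C" by (rule inC)
  then obtain l h where r: "run C (j + 1) l h" using runC by blast
  have r1: "l \<le> j + 1" "j + 1 \<le> h" "{l..h} \<subseteq> C" "l - 1 \<notin> C" "h + 1 \<notin> C"
    using r unfolding run_def by simp_all
  have hge: "j + p \<le> h"
  proof (rule ccontr)
    assume "\<not> j + p \<le> h"
    then have "h + 1 - j \<in> {1..p}" using r1(2) by auto
    then have "j + (h + 1 - j) \<in> C" by (rule inC)
    moreover have "j + (h + 1 - j) = h + 1" using r1(2) by simp
    ultimately show False using r1(5) by simp
  qed
  have lC: "l \<in> C" using r1(1,2,3) by auto
  then have l1: "l \<ge> 1" using C0 by (cases l) auto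
  have rfs: "rf C (j + u) = l + h - (j + u)" if "u \<in> {1..p}" for u
  proof -
    have "l \<le> j + u" "j + u \<le> h" using that r1(1) hge by simp_all
    from rf_eq[OF run_mem[OF r this]] show ?thesis .
  qed
  have ip: "i + p < l"
  proof (rule ccontr)
    assume a: "\<not> i + p < l"
    have tp: "t p \<in> {1..p}" using tin p by simp
    have arc: "(i + p, j + t p) \<in> \<mu>" using arcs p by simp
    then have "i + p < j + t p" using S by blast
    moreover have "j + t p \<le> h" using tp hge by simp
    ultimately have "i + p \<in> {l..h}" using a by simp
    then have "i + p \<in> C" using r1(3) by blast
    moreover have "i + p \<in> fst ` \<mu>" using arc by (rule image_eqI[rotated]) simp
    ultimately show False using D by blast
  qed
  define j' where "j' = l + h - j - p - 1"
  have "i + p \<le> j'" unfolding j'_def using ip hge by simp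
  moreover have "(i + s, j' + (p + 1 - t s)) \<in> phi \<mu>" if s: "s \<in> {1..p}" for s
  proof -
    have ts: "t s \<in> {1..p}" using tin s by simp
    have "j' + (p + 1 - t s) = l + h - (j + t s)" unfolding j'_def using ts hge l1 by simp
    also have "\<dots> = rf C (j + t s)" using rfs[OF ts] by simp
    finally have e: "j' + (p + 1 - t s) = rf C (j + t s)" .
    have "(i + s, j + t s) \<in> \<mu>" using arcs s by simp
    then show ?thesis unfolding mem_phi e by blast
  qed
  ultimately show ?thesis by blast
qed
end

lemma inv_incr: "s \<in> {1..p} \<Longrightarrow> inv_into {1..p} (incr_pat p) s = s"
  by (rule inv_into_f_eq) (auto simp: inj_on_def incr_pat_def)

lemma inv_decr: "s \<in> {1..p} \<Longrightarrow> inv_into {1..p} (decr_pat p) s = p + 1 - s"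
  by (rule inv_into_f_eq) (auto simp: inj_on_def decr_pat_def)

lemma ca_incr: "contains_at \<mu> p (incr_pat p) i j \<longleftrightarrow> i + p \<le> j \<and> (\<forall>s\<in>{1..p}. (i + s, j + s) \<in> \<mu>)"
  unfolding contains_at_def using inv_incr by auto

lemma ca_decr: "contains_at \<mu> p (decr_pat p) i j \<longleftrightarrow> i + p \<le> j \<and> (\<forall>s\<in>{1..p}. (i + s, j + (p + 1 - s)) \<in> \<mu>)"
  unfolding contains_at_def using inv_decr by auto

definition Iset where "Iset \<mu> p \<pi> = fst ` {(i, j). contains_at \<mu> p \<pi> i j}"

lemma occ_Iset: assumes "is_matching n \<mu>" "p \<ge> 1" shows "occurrences \<mu> p \<pi> = card (Iset \<mu> p \<pi>)"
proof -
  have IF: "inj_on fst \<mu>" using assms matching_iff by blast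
  have "inj_on fst {(i, j). contains_at \<mu> p \<pi> i j}"
  proof (rule inj_onI)
    fix x y assume xy: "x \<in> {(i, j). contains_at \<mu> p \<pi> i j}" "y \<in> {(i, j). contains_at \<mu> p \<pi> i j}" "fst x = fst y"
    obtain i j where x: "x = (i, j)" by (cases x)
    obtain i' j' where y: "y = (i', j')" by (cases y)
    have 1: "1 \<in> {1..p}" using assms by auto
    have "(i + 1, j + inv_into {1..p} \<pi> 1) \<in> \<mu>" using xy(1) x 1 unfolding contains_at_def by blast
    moreover have "(i' + 1, j' + inv_into {1..p} \<pi> 1) \<in> \<mu>" using xy(2) y 1 unfolding contains_at_def by blast
    moreover have "i' = i" using xy(3) x y by simp
    ultimately have "j + inv_into {1..p} \<pi> 1 = j' + inv_into {1..p} \<pi> 1" using IF by (metis fst_conv inj_onD prod.inject)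
    then show "x = y" using x y xy(3) by simp
  qed
  from card_image[OF this] show ?thesis unfolding occurrences_def Iset_def by (rule sym)
qed

lemma Iset_iff: "i \<in> Iset \<mu> p \<pi> \<longleftrightarrow> (\<exists>j. contains_at \<mu> p \<pi> i j)"
proof
  assume "i \<in> Iset \<mu> p \<pi>"
  then obtain x where x: "x \<in> {(i, j). contains_at \<mu> p \<pi> i j}" "i = fst x" unfolding Iset_def by blast
  then show "\<exists>j. contains_at \<mu> p \<pi> i j" by (cases x) auto
next
  assume "\<exists>j. contains_at \<mu> p \<pi> i j"
  then obtain j where "contains_at \<mu> p \<pi> i j" by blast
  then have "(i, j) \<in> {(i, j). contains_at \<mu> p \<pi> i j}" by simp
  then show "i \<in> Iset \<mu> p \<pi>" unfolding Iset_def by (rule image_eqI[rotated]) simp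
qed

lemma Iset_sub:
  assumes M: "is_matching n \<mu>" and p: "p \<ge> 1"
  shows "Iset \<mu> p (incr_pat p) \<subseteq> Iset (phi \<mu>) p (decr_pat p)"
    and "Iset \<mu> p (decr_pat p) \<subseteq> Iset (phi \<mu>) p (incr_pat p)"
proof -
  interpret mt n \<mu> using M by unfold_locales
  show "Iset \<mu> p (incr_pat p) \<subseteq> Iset (phi \<mu>) p (decr_pat p)"
  proof
    fix i assume "i \<in> Iset \<mu> p (incr_pat p)"
    then obtain j where "contains_at \<mu> p (incr_pat p) i j" unfolding Iset_iff by blast
    then have "\<forall>s\<in>{1..p}. (i + s, j + s) \<in> \<mu>" using ca_incr by blast
    then have a1: "\<forall>s\<in>{1..p}. (i + s, j + id s) \<in> \<mu>" by simp
    have a2: "\<forall>s\<in>{1..p}. id s \<in> {1..p}" by auto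
    have a3: "\<forall>u\<in>{1..p}. \<exists>s\<in>{1..p}. id s = u" by auto
    obtain j' where "i + p \<le> j'" "\<forall>s\<in>{1..p}. (i + s, j' + (p + 1 - id s)) \<in> phi \<mu>"
      using G[OF p a1 a2 a3] by blast
    then have "contains_at (phi \<mu>) p (decr_pat p) i j'" using ca_decr[of "phi \<mu>" p i j'] by simp
    then show "i \<in> Iset (phi \<mu>) p (decr_pat p)" unfolding Iset_iff by blast
  qed
  show "Iset \<mu> p (decr_pat p) \<subseteq> Iset (phi \<mu>) p (incr_pat p)"
  proof
    fix i assume "i \<in> Iset \<mu> p (decr_pat p)"
    then obtain j where "contains_at \<mu> p (decr_pat p) i j" unfolding Iset_iff by blast
    then have "\<forall>s\<in>{1..p}. (i + s, j + (p + 1 - s)) \<in> \<mu>" using ca_decr by blast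
    then have a1: "\<forall>s\<in>{1..p}. (i + s, j + (\<lambda>s. p + 1 - s) s) \<in> \<mu>" by simp
    have a2: "\<forall>s\<in>{1..p}. (\<lambda>s. p + 1 - s) s \<in> {1..p}" by auto
    have a3: "\<forall>u\<in>{1..p}. \<exists>s\<in>{1..p}. (\<lambda>s. p + 1 - s) s = u"
    proof
      fix u assume "u \<in> {1..p}"
      then have "p + 1 - u \<in> {1..p} \<and> p + 1 - (p + 1 - u) = u" by auto
      then show "\<exists>s\<in>{1..p}. (\<lambda>s. p + 1 - s) s = u" by (intro bexI[of _ "p + 1 - u"]) simp_all
    qed
    obtain j' where j': "i + p \<le> j'" "\<forall>s\<in>{1..p}. (i + s, j' + (p + 1 - (p + 1 - s))) \<in> phi \<mu>"
      using G[OF p a1 a2 a3] by blast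
    have "\<forall>s\<in>{1..p}. (i + s, j' + s) \<in> phi \<mu>"
    proof
      fix s assume "s \<in> {1..p}"
      moreover then have "p + 1 - (p + 1 - s) = s" by auto
      ultimately show "(i + s, j' + s) \<in> phi \<mu>" using j'(2) by metis
    qed
    then have "contains_at (phi \<mu>) p (incr_pat p) i j'" using ca_incr[of "phi \<mu>" p i j'] j' by blast
    then show "i \<in> Iset (phi \<mu>) p (incr_pat p)" unfolding Iset_iff by blast
  qed
qed


lemma occ_swap:
  assumes M: "is_matching n \<mu>" and p: "p \<ge> 1"
  shows "occurrences (phi \<mu>) p (decr_pat p) = occurrences \<mu> p (incr_pat p)"
    and "occurrences (phi \<mu>) p (incr_pat p) = occurrences \<mu> p (decr_pat p)"
proof -
  interpret mt n \<mu> using M by unfold_locales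
  have M': "is_matching n (phi \<mu>)" by (rule phi_matching)
  have e1: "Iset (phi \<mu>) p (decr_pat p) = Iset \<mu> p (incr_pat p)"
    using Iset_sub(1)[OF M p] Iset_sub(2)[OF M' p] phi_phi by auto
  have e2: "Iset (phi \<mu>) p (incr_pat p) = Iset \<mu> p (decr_pat p)"
    using Iset_sub(2)[OF M p] Iset_sub(1)[OF M' p] phi_phi by auto
  show "occurrences (phi \<mu>) p (decr_pat p) = occurrences \<mu> p (incr_pat p)"
    using occ_Iset[OF M p] occ_Iset[OF M' p] e1 by simp
  show "occurrences (phi \<mu>) p (incr_pat p) = occurrences \<mu> p (decr_pat p)"
    using occ_Iset[OF M p] occ_Iset[OF M' p] e2 by simp
qed

lemma phi_phi_g: assumes "is_matching n \<mu>" shows "phi (phi \<mu>) = \<mu>"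
proof -
  interpret mt n \<mu> using assms by unfold_locales
  show ?thesis by (rule phi_phi)
qed

lemma phi_matching_g: assumes "is_matching n \<mu>" shows "is_matching n (phi \<mu>)"
proof -
  interpret mt n \<mu> using assms by unfold_locales
  show ?thesis by (rule phi_matching)
qed

lemma card_swap:
  assumes p: "p \<ge> 1"
  shows "card {\<mu>. is_matching n \<mu> \<and> occurrences \<mu> p (incr_pat p) = k \<and> occurrences \<mu> p (decr_pat p) = m}
       = card {\<mu>. is_matching n \<mu> \<and> occurrences \<mu> p (decr_pat p) = k \<and> occurrences \<mu> p (incr_pat p) = m}"
    (is "card ?A = card ?B")
proof -
  have inj: "inj_on phi ?A"
  proof (rule inj_onI)
    fix x y assume xy: "x \<in> ?A" "y \<in> ?A" "phi x = phi y"
    have "is_matching n x" "is_matching n y" using xy(1,2) by simp_all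
    then have "phi (phi x) = x" "phi (phi y) = y" by (simp_all add: phi_phi_g)
    then show "x = y" using xy(3) by metis
  qed
  have eq: "phi ` ?A = ?B"
  proof
    show "phi ` ?A \<subseteq> ?B"
    proof
      fix y assume "y \<in> phi ` ?A"
      then obtain x where x: "x \<in> ?A" "y = phi x" by blast
      then have Mx: "is_matching n x" by simp
      have "is_matching n (phi x)" using Mx by (rule phi_matching_g)
      moreover have "occurrences (phi x) p (decr_pat p) = k" "occurrences (phi x) p (incr_pat p) = m"
        using x(1) occ_swap[OF Mx p] by simp_all
      ultimately show "y \<in> ?B" using x(2) by simp
    qed
    show "?B \<subseteq> phi ` ?A"
    proof
      fix y assume y: "y \<in> ?B"
      then have My: "is_matching n y" by simp
      have "is_matching n (phi y)" using My by (rule phi_matching_g)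
      moreover have "occurrences (phi y) p (incr_pat p) = k" "occurrences (phi y) p (decr_pat p) = m"
        using y occ_swap[OF My p] by simp_all
      ultimately have "phi y \<in> ?A" by simp
      moreover have "phi (phi y) = y" using My by (rule phi_phi_g)
      ultimately show "y \<in> phi ` ?A" by (intro image_eqI[of y phi "phi y"]) simp_all
    qed
  qed
  have "card ?B = card ?A" unfolding eq[symmetric] by (rule card_image[OF inj])
  then show ?thesis by (rule sym)
qed

theorem corollary1:
  shows "(\<forall>p n k m. p \<ge> 1 \<longrightarrow>
            a_count p n k m (incr_pat p) (decr_pat p) = a_count p n k m (decr_pat p) (incr_pat p))
       \<and> (\<forall>n k m.
            card {\<mu>. is_matching n \<mu> \<and> occurrences \<mu> 2 (decr_pat 2) = k \<and> occurrences \<mu> 2 (incr_pat 2) = m}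
          = card {\<mu>. is_matching n \<mu> \<and> occurrences \<mu> 2 (decr_pat 2) = m \<and> occurrences \<mu> 2 (incr_pat 2) = k})"
proof (intro conjI allI impI)
  fix p n k m :: nat assume "p \<ge> 1"
  then show "a_count p n k m (incr_pat p) (decr_pat p) = a_count p n k m (decr_pat p) (incr_pat p)"
    unfolding a_count_def by (rule card_swap)
next
  fix n k m :: nat
  have "{\<mu>. is_matching n \<mu> \<and> occurrences \<mu> 2 (decr_pat 2) = k \<and> occurrences \<mu> 2 (incr_pat 2) = m}
      = {\<mu>. is_matching n \<mu> \<and> occurrences \<mu> 2 (incr_pat 2) = m \<and> occurrences \<mu> 2 (decr_pat 2) = k}"
    by blast
  moreover have "card {\<mu>. is_matching n \<mu> \<and> occurrences \<mu> 2 (incr_pat 2) = m \<and> occurrences \<mu> 2 (decr_pat 2) = k}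
      = card {\<mu>. is_matching n \<mu> \<and> occurrences \<mu> 2 (decr_pat 2) = m \<and> occurrences \<mu> 2 (incr_pat 2) = k}"
    by (rule card_swap) simp
  ultimately show "card {\<mu>. is_matching n \<mu> \<and> occurrences \<mu> 2 (decr_pat 2) = k \<and> occurrences \<mu> 2 (incr_pat 2) = m}
          = card {\<mu>. is_matching n \<mu> \<and> occurrences \<mu> 2 (decr_pat 2) = m \<and> occurrences \<mu> 2 (incr_pat 2) = k}"
    by simp
qed

end
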